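(* Fix finite nonempty sets $A$ and $\Omega$, a prior $\mu_0$ on $\Omega$ with $\mu_0(\omega)>0$ for all $\omega$, and a finite message set $M$ with $|M|>\max\{|\Omega|,|A|\}$. There is a set of environments of Lebesgue measure one in $[0,1]^{2|A||\Omega|}$ such that, for every environment in this set: if cheap-talk Sender values randomization, then committed Sender values randomization.
   Context: An environment is a pair $(u_S,u_R)$ of functions $A\times\Omega\to[0,1]$, identified with a point of $[0,1]^{2|A||\Omega|}$. A messaging strategy is $\sigma:\Omega\to\Delta M$ and an action strategy is $\rho:M\to\Delta A$. For $i\in\{S,R\}$, $U_i(\sigma,\rho)=\sum_{\omega,m,a}\mu_0(\omega)\sigma(m|\omega)\rho(a|m)u_i(a,\omega)$. A profile $(\sigma,\rho)$ is S-BR if $\sigma\in\arg\max_{\sigma'}U_S(\sigma',\rho)$, and R-BR if $\rho\in\arg\max_{\rho'}U_R(\sigma,\rho')$. A persuasion profile is an R-BR profile; the persuasion payoff is the maximum of $U_S$ over persuasion profiles. A cheap-talk equilibrium is an S-BR and R-BR profile; the cheap-talk payoff is the maximum of $U_S$ over cheap-talk equilibria. $\sigma$ is partitional if for every $\omega$ some $m$ has $\sigma(m|\omega)=1$. The partitional persuasion payoff (resp. partitional cheap-talk payoff) is the maximum of $U_S$ over persuasion profiles (resp. cheap-talk equilibria) with partitional $\sigma$. Committed Sender values randomization if the persuasion payoff strictly exceeds the partitional persuasion payoff. Cheap-talk Sender values randomization if the cheap-talk payoff strictly exceeds the partitional cheap-talk payoff. *)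

theory Defs
  imports "HOL-Analysis.Analysis"
begin

definition is_dist :: "('x::finite \<Rightarrow> real) \<Rightarrow> bool" where
  "is_dist f \<longleftrightarrow> (\<forall>x. 0 \<le> f x) \<and> (\<Sum>x\<in>UNIV. f x) = 1"

definition msg_strat :: "('w::finite \<Rightarrow> 'm::finite \<Rightarrow> real) \<Rightarrow> bool" where
  "msg_strat \<sigma> \<longleftrightarrow> (\<forall>w. is_dist (\<sigma> w))"

definition act_strat :: "('m::finite \<Rightarrow> 'a::finite \<Rightarrow> real) \<Rightarrow> bool" where
  "act_strat \<rho> \<longleftrightarrow> (\<forall>m. is_dist (\<rho> m))"

definition U :: "('w::finite \<Rightarrow> real) \<Rightarrow> ('a::finite \<Rightarrow> 'w \<Rightarrow> real)
    \<Rightarrow> ('w \<Rightarrow> 'm::finite \<Rightarrow> real) \<Rightarrow> ('m \<Rightarrow> 'a \<Rightarrow> real) \<Rightarrow> real" where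
  "U \<mu> u \<sigma> \<rho> = (\<Sum>w\<in>UNIV. \<Sum>m\<in>UNIV. \<Sum>a\<in>UNIV. \<mu> w * \<sigma> w m * \<rho> m a * u a w)"

definition S_BR :: "('w::finite \<Rightarrow> real) \<Rightarrow> ('a::finite \<Rightarrow> 'w \<Rightarrow> real)
    \<Rightarrow> ('w \<Rightarrow> 'm::finite \<Rightarrow> real) \<Rightarrow> ('m \<Rightarrow> 'a \<Rightarrow> real) \<Rightarrow> bool" where
  "S_BR \<mu> uS \<sigma> \<rho> \<longleftrightarrow> (\<forall>\<sigma>'. msg_strat \<sigma>' \<longrightarrow> U \<mu> uS \<sigma>' \<rho> \<le> U \<mu> uS \<sigma> \<rho>)"

definition R_BR :: "('w::finite \<Rightarrow> real) \<Rightarrow> ('a::finite \<Rightarrow> 'w \<Rightarrow> real)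
    \<Rightarrow> ('w \<Rightarrow> 'm::finite \<Rightarrow> real) \<Rightarrow> ('m \<Rightarrow> 'a \<Rightarrow> real) \<Rightarrow> bool" where
  "R_BR \<mu> uR \<sigma> \<rho> \<longleftrightarrow> (\<forall>\<rho>'. act_strat \<rho>' \<longrightarrow> U \<mu> uR \<sigma> \<rho>' \<le> U \<mu> uR \<sigma> \<rho>)"

definition partitional :: "('w::finite \<Rightarrow> 'm::finite \<Rightarrow> real) \<Rightarrow> bool" where
  "partitional \<sigma> \<longleftrightarrow> (\<forall>w. \<exists>m. \<sigma> w m = 1)"

definition persuasion_profile ::
  "('w::finite \<Rightarrow> real) \<Rightarrow> ('a::finite \<Rightarrow> 'w \<Rightarrow> real)
    \<Rightarrow> ('w \<Rightarrow> 'm::finite \<Rightarrow> real) \<Rightarrow> ('m \<Rightarrow> 'a \<Rightarrow> real) \<Rightarrow> bool" where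
  "persuasion_profile \<mu> uR \<sigma> \<rho> \<longleftrightarrow> msg_strat \<sigma> \<and> act_strat \<rho> \<and> R_BR \<mu> uR \<sigma> \<rho>"

definition cheap_talk_eq ::
  "('w::finite \<Rightarrow> real) \<Rightarrow> ('a::finite \<Rightarrow> 'w \<Rightarrow> real) \<Rightarrow> ('a \<Rightarrow> 'w \<Rightarrow> real)
    \<Rightarrow> ('w \<Rightarrow> 'm::finite \<Rightarrow> real) \<Rightarrow> ('m \<Rightarrow> 'a \<Rightarrow> real) \<Rightarrow> bool" where
  "cheap_talk_eq \<mu> uS uR \<sigma> \<rho> \<longleftrightarrow>
     msg_strat \<sigma> \<and> act_strat \<rho> \<and> S_BR \<mu> uS \<sigma> \<rho> \<and> R_BR \<mu> uR \<sigma> \<rho>"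

text \<open>Payoffs: the maximum (written as Sup; the maximum is attained) of U_S.\<close>
definition persuasion_payoff ::
  "'m::finite itself \<Rightarrow> ('w::finite \<Rightarrow> real) \<Rightarrow> ('a::finite \<Rightarrow> 'w \<Rightarrow> real) \<Rightarrow> ('a \<Rightarrow> 'w \<Rightarrow> real) \<Rightarrow> real" where
  "persuasion_payoff _ \<mu> uS uR =
     Sup {U \<mu> uS \<sigma> \<rho> | (\<sigma> :: 'w \<Rightarrow> 'm \<Rightarrow> real) \<rho>. persuasion_profile \<mu> uR \<sigma> \<rho>}"

definition partitional_persuasion_payoff ::
  "'m::finite itself \<Rightarrow> ('w::finite \<Rightarrow> real) \<Rightarrow> ('a::finite \<Rightarrow> 'w \<Rightarrow> real) \<Rightarrow> ('a \<Rightarrow> 'w \<Rightarrow> real) \<Rightarrow> real" where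
  "partitional_persuasion_payoff _ \<mu> uS uR =
     Sup {U \<mu> uS \<sigma> \<rho> | (\<sigma> :: 'w \<Rightarrow> 'm \<Rightarrow> real) \<rho>.
            persuasion_profile \<mu> uR \<sigma> \<rho> \<and> partitional \<sigma>}"

definition cheap_talk_payoff ::
  "'m::finite itself \<Rightarrow> ('w::finite \<Rightarrow> real) \<Rightarrow> ('a::finite \<Rightarrow> 'w \<Rightarrow> real) \<Rightarrow> ('a \<Rightarrow> 'w \<Rightarrow> real) \<Rightarrow> real" where
  "cheap_talk_payoff _ \<mu> uS uR =
     Sup {U \<mu> uS \<sigma> \<rho> | (\<sigma> :: 'w \<Rightarrow> 'm \<Rightarrow> real) \<rho>. cheap_talk_eq \<mu> uS uR \<sigma> \<rho>}"

definition partitional_cheap_talk_payoff ::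
  "'m::finite itself \<Rightarrow> ('w::finite \<Rightarrow> real) \<Rightarrow> ('a::finite \<Rightarrow> 'w \<Rightarrow> real) \<Rightarrow> ('a \<Rightarrow> 'w \<Rightarrow> real) \<Rightarrow> real" where
  "partitional_cheap_talk_payoff _ \<mu> uS uR =
     Sup {U \<mu> uS \<sigma> \<rho> | (\<sigma> :: 'w \<Rightarrow> 'm \<Rightarrow> real) \<rho>.
            cheap_talk_eq \<mu> uS uR \<sigma> \<rho> \<and> partitional \<sigma>}"

definition committed_values_randomization where
  "committed_values_randomization M \<mu> uS uR \<longleftrightarrow>
     persuasion_payoff M \<mu> uS uR > partitional_persuasion_payoff M \<mu> uS uR"

definition cheap_talk_values_randomization where
  "cheap_talk_values_randomization M \<mu> uS uR \<longleftrightarrow>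
     cheap_talk_payoff M \<mu> uS uR > partitional_cheap_talk_payoff M \<mu> uS uR"

text \<open>Environments as points of [0,1]^(2|A||Omega|), coordinates indexed by
  bool x A x Omega: True = Sender, False = Receiver.\<close>
definition env_uS :: "real ^ (bool \<times> 'a::finite \<times> 'w::finite) \<Rightarrow> 'a \<Rightarrow> 'w \<Rightarrow> real" where
  "env_uS x a w = x $ (True, a, w)"

definition env_uR :: "real ^ (bool \<times> 'a::finite \<times> 'w::finite) \<Rightarrow> 'a \<Rightarrow> 'w \<Rightarrow> real" where
  "env_uR x a w = x $ (False, a, w)"

definition unit_cube :: "(real ^ 'n::finite) set" where
  "unit_cube = {x. \<forall>i. 0 \<le> x $ i \<and> x $ i \<le> 1}"

end

theory Submission
  imports Defs
begin

definition gvec :: "('w::finite \<Rightarrow> real) \<Rightarrow> 'w set \<Rightarrow> 'a::finite \<Rightarrow> 'a \<Rightarrow> real ^ (bool \<times> 'a \<times> 'w)" where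
  "gvec \<mu> C a a' = (\<chi> i. (case i of (s, b, v) \<Rightarrow> if s then 0 else
       (if v \<in> C then \<mu> v else 0) * ((if b = a then 1 else 0) - (if b = a' then 1 else 0))))"

lemma gvec_inner: "gvec \<mu> C a a' \<bullet> x = (\<Sum>w\<in>C. \<mu> w * (env_uR x a w - env_uR x a' w))"
proof -
  have "gvec \<mu> C a a' \<bullet> x = (\<Sum>i\<in>UNIV \<times> UNIV \<times> UNIV. gvec \<mu> C a a' $ i * x $ i)"
    by (simp add: inner_vec_def UNIV_Times_UNIV)
  also have "\<dots> = (\<Sum>s\<in>UNIV. \<Sum>b\<in>UNIV. \<Sum>v\<in>UNIV. gvec \<mu> C a a' $ (s,b,v) * x $ (s,b,v))"
    by (simp add: sum.cartesian_product)
  also have "\<dots> = (\<Sum>b\<in>UNIV. \<Sum>v\<in>UNIV. (if v \<in> C then \<mu> v else 0) * ((if b = a then 1 else 0) - (if b = a' then 1 else 0)) * x $ (False,b,v))"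
    by (simp add: UNIV_bool gvec_def)
  also have "\<dots> = (\<Sum>v\<in>UNIV. \<Sum>b\<in>UNIV. (if v \<in> C then \<mu> v else 0) * ((if b = a then 1 else 0) - (if b = a' then 1 else 0)) * x $ (False,b,v))"
    by (rule sum.swap)
  also have "\<dots> = (\<Sum>v\<in>UNIV. (if v \<in> C then \<mu> v else 0) * (x $ (False,a,v) - x $ (False,a',v)))"
  proof (rule sum.cong[OF refl])
    fix v
    have e: "\<And>b. (if v \<in> C then \<mu> v else 0) * ((if b = a then 1 else 0) - (if b = a' then 1 else 0)) * x $ (False,b,v)
       = (if b = a then (if v \<in> C then \<mu> v else 0) * x $ (False,b,v) else 0) - (if b = a' then (if v \<in> C then \<mu> v else 0) * x $ (False,b,v) else 0)"
      by (simp add: algebra_simps)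
    show "(\<Sum>b\<in>UNIV. (if v \<in> C then \<mu> v else 0) * ((if b = a then 1 else 0) - (if b = a' then 1 else 0)) * x $ (False,b,v))
      = (if v \<in> C then \<mu> v else 0) * (x $ (False,a,v) - x $ (False,a',v))"
      unfolding e sum_subtractf by (simp add: algebra_simps)
  qed
  also have "\<dots> = (\<Sum>w\<in>C. \<mu> w * (env_uR x a w - env_uR x a' w))"
  proof -
    have "(\<Sum>w\<in>C. \<mu> w * (env_uR x a w - env_uR x a' w)) = (\<Sum>w\<in>UNIV \<inter> C. \<mu> w * (env_uR x a w - env_uR x a' w))" by simp
    also have "\<dots> = (\<Sum>w\<in>UNIV. if w \<in> C then \<mu> w * (env_uR x a w - env_uR x a' w) else 0)"
      by (rule sum.inter_restrict) simp
    finally show ?thesis by (simp only: env_uR_def) (rule sum.cong, auto)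
  qed
  finally show ?thesis .
qed

lemma unit_cube_cbox: "(unit_cube :: (real^'n::finite) set) = cbox 0 1"
  by (auto simp: mem_box_cart unit_cube_def)

lemma cube_measure: "emeasure lebesgue (cbox (0::real^'n::finite) 1) = 1"
proof -
  have b: "\<And>b. b \<in> Basis \<Longrightarrow> (1 - 0::real^'n) \<bullet> b = 1"
    by (auto simp: Basis_vec_def inner_axis)
  have "emeasure lebesgue (cbox (0::real^'n::finite) 1) = emeasure lborel (cbox (0::real^'n::finite) 1)"
    by (simp add: emeasure_completion)
  also have "emeasure lborel (cbox (0::real^'n::finite) 1) = 1"
    apply (subst emeasure_lborel_cbox)
    using b apply simp
    using b by (simp add: prod.neutral)
  finally show ?thesis .
qed

lemma measure_part:
  fixes \<mu> :: "'w::finite \<Rightarrow> real"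
  assumes pos: "\<forall>w. \<mu> w > 0"
  defines "N \<equiv> \<Union>((\<lambda>(C,a,a'). {x::real^(bool\<times>'a::finite\<times>'w). gvec \<mu> C a a' \<bullet> x = 0}) ` {(C,a,a'). C \<noteq> {} \<and> a \<noteq> a'})"
  shows "unit_cube - N \<in> sets lebesgue \<and> emeasure lebesgue (unit_cube - N) = 1"
proof -
  have negl: "negligible N"
    unfolding N_def
  proof (rule negligible_Union)
    show "finite ((\<lambda>(C,a,a'). {x::real^(bool\<times>'a::finite\<times>'w). gvec \<mu> C a a' \<bullet> x = 0}) ` {(C,a,a'). C \<noteq> {} \<and> a \<noteq> a'})"
      by simp
  next
    fix T assume "T \<in> (\<lambda>(C,a,a'). {x::real^(bool\<times>'a::finite\<times>'w). gvec \<mu> C a a' \<bullet> x = 0}) ` {(C,a,a'). C \<noteq> {} \<and> a \<noteq> a'}"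
    then obtain C a a' where T: "T = {x::real^(bool\<times>'a::finite\<times>'w). gvec \<mu> C a a' \<bullet> x = 0}" and C: "C \<noteq> {}" and aa: "a \<noteq> a'"
      by auto
    from C obtain w where w: "w \<in> C" by auto
    have "gvec \<mu> C a a' $ (False, a, w) = \<mu> w" using w aa by (simp add: gvec_def)
    hence "gvec \<mu> C a a' \<noteq> 0" using pos by (metis less_irrefl zero_index)
    thus "negligible T" unfolding T by (intro negligible_hyperplane) simp
  qed
  hence nul: "N \<in> null_sets lebesgue" by (simp add: negligible_iff_null_sets)
  have cs: "(unit_cube :: (real^(bool\<times>'a\<times>'w)) set) \<in> sets lebesgue"
    unfolding unit_cube_cbox by simp
  have "emeasure lebesgue (unit_cube :: (real^(bool\<times>'a\<times>'w)) set) = 1"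
    unfolding unit_cube_cbox by (rule cube_measure)
  moreover have "unit_cube - N \<in> sets lebesgue" using cs nul by auto
  ultimately show ?thesis using emeasure_Diff_null_set[OF nul cs] by simp
qed

definition G :: "('w::finite \<Rightarrow> real) \<Rightarrow> ('a::finite \<Rightarrow> 'w \<Rightarrow> real) \<Rightarrow> ('w \<Rightarrow> 'm::finite \<Rightarrow> real) \<Rightarrow> 'm \<Rightarrow> 'a \<Rightarrow> real" where
  "G \<mu> u \<sigma> m a = (\<Sum>w\<in>UNIV. \<mu> w * \<sigma> w m * u a w)"

definition dl :: "('m \<Rightarrow> 'a::finite) \<Rightarrow> 'm \<Rightarrow> 'a \<Rightarrow> real" where
  "dl \<beta> m a = (if a = \<beta> m then 1 else 0)"

definition ind :: "('w \<Rightarrow> 'm::finite) \<Rightarrow> 'w \<Rightarrow> 'm \<Rightarrow> real" where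
  "ind f w m = (if m = f w then 1 else 0)"

lemma U_recv: "U \<mu> u \<sigma> \<rho> = (\<Sum>m\<in>UNIV. \<Sum>a\<in>UNIV. \<rho> m a * G \<mu> u \<sigma> m a)"
proof -
  have "U \<mu> u \<sigma> \<rho> = (\<Sum>m\<in>UNIV. \<Sum>w\<in>UNIV. \<Sum>a\<in>UNIV. \<mu> w * \<sigma> w m * \<rho> m a * u a w)"
    unfolding U_def by (rule sum.swap)
  also have "\<dots> = (\<Sum>m\<in>UNIV. \<Sum>a\<in>UNIV. \<Sum>w\<in>UNIV. \<mu> w * \<sigma> w m * \<rho> m a * u a w)"
    by (rule sum.cong[OF refl], rule sum.swap)
  also have "\<dots> = (\<Sum>m\<in>UNIV. \<Sum>a\<in>UNIV. \<rho> m a * G \<mu> u \<sigma> m a)"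
    by (simp add: G_def sum_distrib_left mult_ac)
  finally show ?thesis .
qed

lemma U_send: "U \<mu> u \<sigma> \<rho> = (\<Sum>w\<in>UNIV. \<mu> w * (\<Sum>m\<in>UNIV. \<sigma> w m * (\<Sum>a\<in>UNIV. \<rho> m a * u a w)))"
  by (simp add: U_def sum_distrib_left mult_ac)

lemma sum_dl: "(\<Sum>a\<in>UNIV. dl \<beta> m a * g a) = g (\<beta> m)"
proof -
  have "(\<Sum>a\<in>UNIV. dl \<beta> m a * g a) = (\<Sum>a\<in>UNIV. if a = \<beta> m then g a else 0)"
    by (rule sum.cong) (auto simp: dl_def)
  also have "\<dots> = g (\<beta> m)" by (simp add: sum.delta)
  finally show ?thesis .
qed

lemma sum_ind: "(\<Sum>m\<in>UNIV. ind f w m * g m) = g (f w)"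
proof -
  have "(\<Sum>m\<in>UNIV. ind f w m * g m) = (\<Sum>m\<in>UNIV. if m = f w then g m else 0)"
    by (rule sum.cong) (auto simp: ind_def)
  also have "\<dots> = g (f w)" by (simp add: sum.delta)
  finally show ?thesis .
qed

lemma U_dl: "U \<mu> u \<sigma> (dl \<beta>) = (\<Sum>w\<in>UNIV. \<mu> w * (\<Sum>m\<in>UNIV. \<sigma> w m * u (\<beta> m) w))"
  apply (subst U_send) apply (subst sum_dl) apply (rule refl) done

lemma U_ind_dl: "U \<mu> u (ind f) (dl \<beta>) = (\<Sum>w\<in>UNIV. \<mu> w * u (\<beta> (f w)) w)"
  apply (subst U_dl) apply (subst sum_ind) apply (rule refl) done

lemma act_dl: "act_strat (dl \<beta>)"
  unfolding act_strat_def is_dist_def dl_def by (simp add: sum.delta)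

lemma msg_ind: "msg_strat (ind f)"
  unfolding msg_strat_def is_dist_def ind_def by (simp add: sum.delta)

lemma part_ind: "partitional (ind f)"
  unfolding partitional_def ind_def by auto

lemma RBR_dl:
  assumes "\<forall>m a. G \<mu> uR \<sigma> m a \<le> G \<mu> uR \<sigma> m (\<beta> m)"
  shows "R_BR \<mu> uR \<sigma> (dl \<beta>)"
  unfolding R_BR_def
proof (intro allI impI)
  fix \<rho>' :: "'a \<Rightarrow> 'b \<Rightarrow> real" assume "act_strat \<rho>'"
  hence d: "\<And>m. (\<forall>a. 0 \<le> \<rho>' m a) \<and> (\<Sum>a\<in>UNIV. \<rho>' m a) = 1"
    by (auto simp: act_strat_def is_dist_def)
  have "U \<mu> uR \<sigma> \<rho>' = (\<Sum>m\<in>UNIV. \<Sum>a\<in>UNIV. \<rho>' m a * G \<mu> uR \<sigma> m a)" by (rule U_recv)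
  also have "\<dots> \<le> (\<Sum>m\<in>UNIV. \<Sum>a\<in>UNIV. \<rho>' m a * G \<mu> uR \<sigma> m (\<beta> m))"
  proof (rule sum_mono, rule sum_mono)
    fix m a
    have "0 \<le> \<rho>' m a" using d[of m] by blast
    moreover have "G \<mu> uR \<sigma> m a \<le> G \<mu> uR \<sigma> m (\<beta> m)" using assms by blast
    ultimately show "\<rho>' m a * G \<mu> uR \<sigma> m a \<le> \<rho>' m a * G \<mu> uR \<sigma> m (\<beta> m)"
      by (rule mult_left_mono[rotated])
  qed
  also have "\<dots> = (\<Sum>m\<in>UNIV. G \<mu> uR \<sigma> m (\<beta> m))"
  proof (rule sum.cong[OF refl])
    fix m
    have "(\<Sum>a\<in>UNIV. \<rho>' m a * G \<mu> uR \<sigma> m (\<beta> m)) = (\<Sum>a\<in>UNIV. \<rho>' m a) * G \<mu> uR \<sigma> m (\<beta> m)"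
      by (rule sum_distrib_right[symmetric])
    thus "(\<Sum>a\<in>UNIV. \<rho>' m a * G \<mu> uR \<sigma> m (\<beta> m)) = G \<mu> uR \<sigma> m (\<beta> m)" using d[of m] by simp
  qed
  also have "\<dots> = U \<mu> uR \<sigma> (dl \<beta>)" by (subst U_recv) (simp only: sum_dl)
  finally show "U \<mu> uR \<sigma> \<rho>' \<le> U \<mu> uR \<sigma> (dl \<beta>)" .
qed

lemma dist_one:
  fixes \<sigma> :: "'w::finite \<Rightarrow> 'm::finite \<Rightarrow> real"
  assumes "msg_strat \<sigma>" "\<sigma> w m0 = 1"
  shows "\<sigma> w m = (if m = m0 then 1 else 0)"
proof -
  have nn: "\<forall>m. 0 \<le> \<sigma> w m" and s1: "(\<Sum>m\<in>UNIV. \<sigma> w m) = 1"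
    using assms(1) unfolding msg_strat_def is_dist_def by blast+
  have "(\<Sum>m\<in>UNIV. \<sigma> w m) = \<sigma> w m0 + (\<Sum>m\<in>UNIV - {m0}. \<sigma> w m)"
    by (rule sum.remove) auto
  hence z: "(\<Sum>m\<in>UNIV - {m0}. \<sigma> w m) = 0" using assms(2) s1 by linarith
  have "\<forall>m\<in>UNIV - {m0}. \<sigma> w m = 0"
    using z sum_nonneg_eq_0_iff[of "UNIV - {m0}" "\<sigma> w"] nn by auto
  thus ?thesis using assms(2) by auto
qed
lemma part_is_ind:
  assumes "msg_strat \<sigma>" "partitional \<sigma>"
  shows "\<sigma> = ind (\<lambda>w. SOME m. \<sigma> w m = 1)"
proof (intro ext)
  fix w m
  have f1: "\<sigma> w (SOME m. \<sigma> w m = 1) = 1" by (rule someI_ex) (use assms(2) in \<open>auto simp: partitional_def\<close>)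
  show "\<sigma> w m = ind (\<lambda>w. SOME m. \<sigma> w m = 1) w m"
    unfolding ind_def by (rule dist_one[OF assms(1) f1])
qed

lemma U_le_1:
  assumes "\<forall>w. 0 \<le> \<mu> w" "(\<Sum>w\<in>UNIV. \<mu> w) = 1" "\<forall>a w. u a w \<le> 1" "msg_strat \<sigma>" "act_strat \<rho>"
  shows "U \<mu> u \<sigma> \<rho> \<le> 1"
proof -
  have s: "\<forall>w. (\<forall>m. 0 \<le> \<sigma> w m) \<and> (\<Sum>m\<in>UNIV. \<sigma> w m) = 1"
    using assms(4) by (auto simp: msg_strat_def is_dist_def)
  have r: "\<forall>m. (\<forall>a. 0 \<le> \<rho> m a) \<and> (\<Sum>a\<in>UNIV. \<rho> m a) = 1"
    using assms(5) by (auto simp: act_strat_def is_dist_def)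
  have i1: "(\<Sum>a\<in>UNIV. \<rho> m a * u a w) \<le> 1" for m w
  proof -
    have "(\<Sum>a\<in>UNIV. \<rho> m a * u a w) \<le> (\<Sum>a\<in>UNIV. \<rho> m a * 1)"
      by (intro sum_mono mult_left_mono) (use assms(3) r in auto)
    thus ?thesis using r by simp
  qed
  have i2: "(\<Sum>m\<in>UNIV. \<sigma> w m * (\<Sum>a\<in>UNIV. \<rho> m a * u a w)) \<le> 1" for w
  proof -
    have "(\<Sum>m\<in>UNIV. \<sigma> w m * (\<Sum>a\<in>UNIV. \<rho> m a * u a w)) \<le> (\<Sum>m\<in>UNIV. \<sigma> w m * 1)"
      by (intro sum_mono mult_left_mono) (use i1 s in auto)
    thus ?thesis using s by simp
  qed
  have "U \<mu> u \<sigma> \<rho> \<le> (\<Sum>w\<in>UNIV. \<mu> w * 1)"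
    unfolding U_send by (intro sum_mono mult_left_mono) (use i2 assms(1) in auto)
  thus ?thesis using assms(2) by simp
qed

lemma ex_max: "\<exists>a::'a::finite. \<forall>a'. g a' \<le> (g a :: real)"
proof -
  have "Max (range g) \<in> range g" by (intro Max_in) auto
  then obtain a where a: "Max (range g) = g a" by blast
  have "g a' \<le> g a" for a'
  proof -
    have "g a' \<le> Max (range g)" by (rule Max_ge) auto
    thus ?thesis using a by simp
  qed
  thus ?thesis by blast
qed

lemma G_ind: "G \<mu> u (ind f) m a = (\<Sum>w\<in>{w. f w = m}. \<mu> w * u a w)"
proof -
  have "G \<mu> u (ind f) m a = (\<Sum>w\<in>UNIV. if w \<in> {w. f w = m} then \<mu> w * u a w else 0)"
    unfolding G_def by (rule sum.cong) (auto simp: ind_def)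
  also have "\<dots> = (\<Sum>w\<in>UNIV \<inter> {w. f w = m}. \<mu> w * u a w)"
    by (rule sum.inter_restrict[symmetric]) simp
  finally show ?thesis by simp
qed

lemma sum_c:
  fixes g :: "'m::finite \<Rightarrow> real"
  shows "(\<Sum>m\<in>UNIV. ((if m = m2 then 1 else 0) - (if m = m1 then 1 else 0)) * (g m :: real)) = g m2 - g m1"
proof -
  have "(\<Sum>m\<in>UNIV. ((if m = m2 then 1 else 0) - (if m = m1 then 1 else 0)) * g m)
      = (\<Sum>m\<in>UNIV. (if m = m2 then g m else 0) - (if m = m1 then g m else 0))"
    by (rule sum.cong) auto
  also have "\<dots> = g m2 - g m1" by (simp add: sum_subtractf sum.delta)
  finally show ?thesis .
qed

lemma G_pert: "G \<mu> u (\<lambda>w' m'. \<sigma> w' m' + (if w' = w then e * c m' else 0)) m a = G \<mu> u \<sigma> m a + e * \<mu> w * c m * u a w"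
proof -
  have "G \<mu> u (\<lambda>w' m'. \<sigma> w' m' + (if w' = w then e * c m' else 0)) m a
      = (\<Sum>w'\<in>UNIV. \<mu> w' * \<sigma> w' m * u a w' + (if w' = w then \<mu> w * (e * c m) * u a w else 0))"
    unfolding G_def by (rule sum.cong) (auto simp: algebra_simps)
  also have "\<dots> = G \<mu> u \<sigma> m a + \<mu> w * (e * c m) * u a w"
    by (simp add: sum.distrib G_def sum.delta)
  finally show ?thesis by (simp add: algebra_simps)
qed

lemma U_pert: "U \<mu> u (\<lambda>w' m'. \<sigma> w' m' + (if w' = w then e * c m' else 0)) (dl \<beta>)
   = U \<mu> u \<sigma> (dl \<beta>) + e * \<mu> w * (\<Sum>m\<in>UNIV. c m * u (\<beta> m) w)"
proof -
  have "U \<mu> u (\<lambda>w' m'. \<sigma> w' m' + (if w' = w then e * c m' else 0)) (dl \<beta>)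
     = (\<Sum>w'\<in>UNIV. \<mu> w' * (\<Sum>m\<in>UNIV. (\<sigma> w' m + (if w' = w then e * c m else 0)) * u (\<beta> m) w'))"
    by (rule U_dl)
  also have "\<dots> = (\<Sum>w'\<in>UNIV. \<mu> w' * (\<Sum>m\<in>UNIV. \<sigma> w' m * u (\<beta> m) w') + (if w' = w then e * \<mu> w * (\<Sum>m\<in>UNIV. c m * u (\<beta> m) w) else 0))"
  proof (rule sum.cong[OF refl])
    fix w' show "\<mu> w' * (\<Sum>m\<in>UNIV. (\<sigma> w' m + (if w' = w then e * c m else 0)) * u (\<beta> m) w')
      = \<mu> w' * (\<Sum>m\<in>UNIV. \<sigma> w' m * u (\<beta> m) w') + (if w' = w then e * \<mu> w * (\<Sum>m\<in>UNIV. c m * u (\<beta> m) w) else 0)"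
      by (cases "w' = w") (simp_all add: algebra_simps sum.distrib sum_distrib_left)
  qed
  also have "\<dots> = U \<mu> u \<sigma> (dl \<beta>) + e * \<mu> w * (\<Sum>m\<in>UNIV. c m * u (\<beta> m) w)"
    by (simp add: sum.distrib sum.delta U_dl)
  finally show ?thesis .
qed

lemma msg_pert:
  fixes \<sigma> :: "'w::finite \<Rightarrow> 'm::finite \<Rightarrow> real"
  assumes ms: "msg_strat \<sigma>" and one: "\<sigma> w m1 = 1" and ne: "m1 \<noteq> m2" and e0: "0 \<le> e" and e1: "e \<le> 1"
  defines "c \<equiv> (\<lambda>m'. (if m' = m2 then 1 else 0) - (if m' = m1 then 1 else (0::real)))"
  shows "msg_strat (\<lambda>w' m'. \<sigma> w' m' + (if w' = w then e * c m' else 0))"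
  unfolding msg_strat_def is_dist_def
proof (intro allI conjI)
  fix w' m'
  have nn: "0 \<le> \<sigma> w' m'" using ms by (auto simp: msg_strat_def is_dist_def)
  have ind: "\<sigma> w m' = (if m' = m1 then 1 else 0)" by (rule dist_one[OF ms one])
  show "0 \<le> \<sigma> w' m' + (if w' = w then e * c m' else 0)"
  proof (cases "w' = w")
    case True
    thus ?thesis using ind ne e0 e1 by (auto simp: c_def)
  qed (use nn in simp)
next
  fix w'
  have s1: "(\<Sum>m\<in>UNIV. \<sigma> w' m) = 1" using ms by (auto simp: msg_strat_def is_dist_def)
  have sc: "(\<Sum>m\<in>UNIV. c m) = 0"
    using sum_c[of m2 m1 "\<lambda>_. 1"] by (simp add: c_def)
  have "(\<Sum>m'\<in>UNIV. \<sigma> w' m' + (if w' = w then e * c m' else 0)) = (\<Sum>m'\<in>UNIV. \<sigma> w' m') + (if w' = w then e * (\<Sum>m'\<in>UNIV. c m') else 0)"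
    by (cases "w' = w") (simp_all add: sum.distrib sum_distrib_left)
  thus "(\<Sum>m'\<in>UNIV. \<sigma> w' m' + (if w' = w then e * c m' else 0)) = 1" using s1 sc by simp
qed

lemma dist_others:
  fixes p :: "'a::finite \<Rightarrow> real"
  assumes "\<forall>a. a \<noteq> b \<longrightarrow> p a = 0" "(\<Sum>a\<in>UNIV. p a) = 1"
  shows "p b = 1"
proof -
  have "(\<Sum>a\<in>UNIV. p a) = p b + (\<Sum>a\<in>UNIV - {b}. p a)" by (rule sum.remove) auto
  also have "(\<Sum>a\<in>UNIV - {b}. p a) = 0" using assms(1) by (intro sum.neutral) auto
  finally show ?thesis using assms(2) by simp
qed

lemma game:
  fixes \<mu> :: "'w::finite \<Rightarrow> real" and uS uR :: "'a::finite \<Rightarrow> 'w \<Rightarrow> real"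
  assumes pos: "\<forall>w. \<mu> w > 0" and s1: "(\<Sum>w\<in>UNIV. \<mu> w) = 1" and uS1: "\<forall>a w. uS a w \<le> 1"
    and gen: "\<forall>C a a'. C \<noteq> {} \<longrightarrow> a \<noteq> a' \<longrightarrow> (\<Sum>w\<in>C. \<mu> w * uR a w) \<noteq> (\<Sum>w\<in>C. \<mu> w * uR a' w)"
    and ct: "cheap_talk_values_randomization TYPE('m::finite) \<mu> uS uR"
  shows "committed_values_randomization TYPE('m) \<mu> uS uR"
proof (rule ccontr)
  assume nc: "\<not> ?thesis"
  define PS where "PS = {U \<mu> uS \<sigma> \<rho> |(\<sigma>::'w\<Rightarrow>'m\<Rightarrow>real) \<rho>. persuasion_profile \<mu> uR \<sigma> \<rho>}"
  define PP where "PP = {U \<mu> uS \<sigma> \<rho> |(\<sigma>::'w\<Rightarrow>'m\<Rightarrow>real) \<rho>. persuasion_profile \<mu> uR \<sigma> \<rho> \<and> partitional \<sigma>}"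
  define CS where "CS = {U \<mu> uS \<sigma> \<rho> |(\<sigma>::'w\<Rightarrow>'m\<Rightarrow>real) \<rho>. cheap_talk_eq \<mu> uS uR \<sigma> \<rho>}"
  define CP where "CP = {U \<mu> uS \<sigma> \<rho> |(\<sigma>::'w\<Rightarrow>'m\<Rightarrow>real) \<rho>. cheap_talk_eq \<mu> uS uR \<sigma> \<rho> \<and> partitional \<sigma>}"
  have nc': "Sup PS \<le> Sup PP"
    using nc unfolding committed_values_randomization_def persuasion_payoff_def
      partitional_persuasion_payoff_def PS_def PP_def by simp
  have ct': "Sup CP < Sup CS"
    using ct unfolding cheap_talk_values_randomization_def cheap_talk_payoff_def
      partitional_cheap_talk_payoff_def CS_def CP_def by simp
  have mu0: "\<forall>w. 0 \<le> \<mu> w" using pos by (simp add: less_imp_le)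
  have bddPS: "bdd_above PS"
  proof (rule bdd_aboveI)
    fix x assume "x \<in> PS"
    then obtain \<sigma> :: "'w\<Rightarrow>'m\<Rightarrow>real" and \<rho> where "x = U \<mu> uS \<sigma> \<rho>" "persuasion_profile \<mu> uR \<sigma> \<rho>"
      unfolding PS_def by blast
    thus "x \<le> 1" using U_le_1[OF mu0 s1 uS1] by (auto simp: persuasion_profile_def)
  qed
  define bf :: "('w \<Rightarrow> 'm) \<Rightarrow> 'm \<Rightarrow> 'a" where
    "bf f m = (SOME a. \<forall>a'. G \<mu> uR (ind f) m a' \<le> G \<mu> uR (ind f) m a)" for f m
  have bf_max: "G \<mu> uR (ind f) m a \<le> G \<mu> uR (ind f) m (bf f m)" for f m a
    using someI_ex[OF ex_max[of "G \<mu> uR (ind f) m"]] unfolding bf_def by blast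
  have bf_strict: "G \<mu> uR (ind f) (f w) a < G \<mu> uR (ind f) (f w) (bf f (f w))"
    if "a \<noteq> bf f (f w)" for f w a
  proof -
    have ne: "{v. f v = f w} \<noteq> {}" by auto
    have "G \<mu> uR (ind f) (f w) a \<noteq> G \<mu> uR (ind f) (f w) (bf f (f w))"
      unfolding G_ind by (rule gen[rule_format, OF ne that])
    with bf_max[of f "f w" a] show ?thesis by simp
  qed
  define val where "val f = (\<Sum>w\<in>UNIV. \<mu> w * uS (bf f (f w)) w)" for f :: "'w \<Rightarrow> 'm"
  have pp_val: "U \<mu> uS \<sigma> \<rho> = val (\<lambda>w. SOME m. \<sigma> w m = 1)"
    if pp: "persuasion_profile \<mu> uR \<sigma> \<rho>" and pt: "partitional \<sigma>" for \<sigma> :: "'w\<Rightarrow>'m\<Rightarrow>real" and \<rho>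
  proof -
    define f where "f = (\<lambda>w. SOME m. \<sigma> w m = 1)"
    have ms: "msg_strat \<sigma>" and act: "act_strat \<rho>" and rbr: "R_BR \<mu> uR \<sigma> \<rho>"
      using pp by (auto simp: persuasion_profile_def)
    have sf: "\<sigma> = ind f" unfolding f_def by (rule part_is_ind[OF ms pt])
    have rd: "\<And>m. (\<forall>a. 0 \<le> \<rho> m a) \<and> (\<Sum>a\<in>UNIV. \<rho> m a) = 1"
      using act by (auto simp: act_strat_def is_dist_def)
    let ?G = "G \<mu> uR (ind f)"
    have le_each: "(\<Sum>a\<in>UNIV. \<rho> m a * ?G m a) \<le> ?G m (bf f m)" for m
    proof -
      have "(\<Sum>a\<in>UNIV. \<rho> m a * ?G m a) \<le> (\<Sum>a\<in>UNIV. \<rho> m a * ?G m (bf f m))"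
      proof (rule sum_mono)
        fix a
        have "0 \<le> \<rho> m a" using rd[of m] by blast
        thus "\<rho> m a * ?G m a \<le> \<rho> m a * ?G m (bf f m)" using bf_max by (rule mult_left_mono[rotated])
      qed
      also have "\<dots> = (\<Sum>a\<in>UNIV. \<rho> m a) * ?G m (bf f m)" by (rule sum_distrib_right[symmetric])
      also have "\<dots> = ?G m (bf f m)" using rd[of m] by simp
      finally show ?thesis .
    qed
    have "U \<mu> uR \<sigma> (dl (bf f)) \<le> U \<mu> uR \<sigma> \<rho>" using rbr act_dl unfolding R_BR_def by blast
    hence tot: "(\<Sum>m\<in>UNIV. ?G m (bf f m)) \<le> (\<Sum>m\<in>UNIV. \<Sum>a\<in>UNIV. \<rho> m a * ?G m a)"
      unfolding sf U_recv sum_dl .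
    have eq_each: "(\<Sum>a\<in>UNIV. \<rho> m a * ?G m a) = ?G m (bf f m)" for m
    proof -
      have "(\<Sum>m\<in>UNIV. ?G m (bf f m) - (\<Sum>a\<in>UNIV. \<rho> m a * ?G m a)) = 0"
        using tot le_each sum_mono[of UNIV "\<lambda>m. \<Sum>a\<in>UNIV. \<rho> m a * ?G m a" "\<lambda>m. ?G m (bf f m)"]
        by (simp add: sum_subtractf)
      hence "\<forall>m\<in>UNIV. ?G m (bf f m) - (\<Sum>a\<in>UNIV. \<rho> m a * ?G m a) = 0"
        using sum_nonneg_eq_0_iff[of UNIV "\<lambda>m. ?G m (bf f m) - (\<Sum>a\<in>UNIV. \<rho> m a * ?G m a)"] le_each
        by simp
      thus ?thesis by simp
    qed
    have rho_dl: "\<rho> (f w) a = dl (bf f) (f w) a" for w a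
    proof -
      let ?m = "f w"
      let ?b = "bf f ?m"
      have "(\<Sum>a\<in>UNIV. \<rho> ?m a * (?G ?m ?b - ?G ?m a)) = (\<Sum>a\<in>UNIV. \<rho> ?m a) * ?G ?m ?b - (\<Sum>a\<in>UNIV. \<rho> ?m a * ?G ?m a)"
        by (simp add: right_diff_distrib sum_subtractf sum_distrib_right)
      also have "\<dots> = 0" using rd[of ?m] eq_each[of ?m] by simp
      finally have z: "(\<Sum>a\<in>UNIV. \<rho> ?m a * (?G ?m ?b - ?G ?m a)) = 0" .
      have nn: "\<forall>a\<in>UNIV. 0 \<le> \<rho> ?m a * (?G ?m ?b - ?G ?m a)"
        using rd[of ?m] bf_max by simp
      have z2: "\<forall>a\<in>UNIV. \<rho> ?m a * (?G ?m ?b - ?G ?m a) = 0"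
        using z nn sum_nonneg_eq_0_iff[of UNIV "\<lambda>a. \<rho> ?m a * (?G ?m ?b - ?G ?m a)"] by simp
      have others: "\<forall>a. a \<noteq> ?b \<longrightarrow> \<rho> ?m a = 0"
      proof (intro allI impI)
        fix a assume "a \<noteq> ?b"
        hence "?G ?m a < ?G ?m ?b" by (rule bf_strict)
        hence pos': "?G ?m ?b - ?G ?m a \<noteq> 0" by simp
        have "\<rho> ?m a * (?G ?m ?b - ?G ?m a) = 0" using z2 by blast
        thus "\<rho> ?m a = 0" using pos' by simp
      qed
      have "\<rho> ?m ?b = 1" using dist_others[OF others] rd[of ?m] by blast
      thus ?thesis using others by (auto simp: dl_def)
    qed
    have "U \<mu> uS \<sigma> \<rho> = (\<Sum>w\<in>UNIV. \<mu> w * (\<Sum>a\<in>UNIV. \<rho> (f w) a * uS a w))"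
      unfolding U_send sf sum_ind ..
    also have "\<dots> = (\<Sum>w\<in>UNIV. \<mu> w * (\<Sum>a\<in>UNIV. dl (bf f) (f w) a * uS a w))"
      by (simp only: rho_dl)
    also have "\<dots> = val f" unfolding sum_dl val_def ..
    finally show ?thesis unfolding f_def .
  qed
  have finPP: "finite PP"
  proof (rule finite_subset)
    show "PP \<subseteq> range val" unfolding PP_def using pp_val by blast
  qed simp
  define f0 :: "'w \<Rightarrow> 'm" where "f0 = (\<lambda>_. undefined)"
  have "persuasion_profile \<mu> uR (ind f0) (dl (bf f0))"
    unfolding persuasion_profile_def using msg_ind act_dl RBR_dl bf_max by blast
  hence nePP: "PP \<noteq> {}" unfolding PP_def using part_ind by blast
  have "Sup PP \<in> PP" using finPP nePP by (simp add: cSup_eq_Max)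
  then obtain \<sigma>0 :: "'w\<Rightarrow>'m\<Rightarrow>real" and \<rho>0 where sp: "Sup PP = U \<mu> uS \<sigma>0 \<rho>0"
    and pp0: "persuasion_profile \<mu> uR \<sigma>0 \<rho>0" and pt0: "partitional \<sigma>0"
    unfolding PP_def by blast
  define f where "f = (\<lambda>w. SOME m. \<sigma>0 w m = 1)"
  have vp: "Sup PP = val f" using sp pp_val[OF pp0 pt0] f_def by simp
  define w0 :: 'w where "w0 = undefined"
  define \<beta> where "\<beta> m = (if m \<in> range f then bf f m else bf f (f w0))" for m
  have \<beta>f: "\<beta> (f w) = bf f (f w)" for w by (simp add: \<beta>_def)
  have Gle: "G \<mu> uR (ind f) m a \<le> G \<mu> uR (ind f) m (\<beta> m)" for m a
  proof (cases "m \<in> range f")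
    case True thus ?thesis using bf_max by (simp add: \<beta>_def)
  next
    case False
    hence "{w. f w = m} = {}" by auto
    thus ?thesis by (simp add: G_ind)
  qed
  have rbr: "R_BR \<mu> uR (ind f) (dl \<beta>)" using RBR_dl Gle by blast
  have Uval: "U \<mu> uS (ind f) (dl \<beta>) = val f" unfolding U_ind_dl val_def \<beta>f ..
  have ppf: "persuasion_profile \<mu> uR (ind f) (dl \<beta>)"
    unfolding persuasion_profile_def using msg_ind act_dl rbr by blast
  show False
  proof (cases "S_BR \<mu> uS (ind f) (dl \<beta>)")
    case True
    hence cte: "cheap_talk_eq \<mu> uS uR (ind f) (dl \<beta>)"
      using ppf unfolding cheap_talk_eq_def persuasion_profile_def by blast
    have inCP: "val f \<in> CP" unfolding CP_def using cte part_ind Uval by force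
    have inCS: "val f \<in> CS" unfolding CS_def using cte Uval by force
    have CSPS: "CS \<subseteq> PS" unfolding CS_def PS_def cheap_talk_eq_def persuasion_profile_def by blast
    have CPPS: "CP \<subseteq> PS" unfolding CP_def PS_def cheap_talk_eq_def persuasion_profile_def by blast
    have "val f \<le> Sup CP" using inCP bdd_above_mono[OF bddPS CPPS] by (rule cSup_upper)
    moreover have "Sup CS \<le> Sup PS" using inCS CSPS bddPS by (intro cSup_subset_mono) auto
    ultimately show False using ct' nc' vp by simp
  next
    case False
    then obtain \<sigma>' :: "'w\<Rightarrow>'m\<Rightarrow>real" where ms': "msg_strat \<sigma>'"
      and gt: "U \<mu> uS \<sigma>' (dl \<beta>) > U \<mu> uS (ind f) (dl \<beta>)"
      unfolding S_BR_def by (auto simp: not_le)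
    have "\<exists>w m. uS (\<beta> m) w > uS (\<beta> (f w)) w"
    proof (rule ccontr)
      assume "\<not> ?thesis"
      hence le: "\<And>w m. uS (\<beta> m) w \<le> uS (\<beta> (f w)) w" by (auto simp: not_less)
      have sd: "\<And>w. (\<forall>m. 0 \<le> \<sigma>' w m) \<and> (\<Sum>m\<in>UNIV. \<sigma>' w m) = 1"
        using ms' by (auto simp: msg_strat_def is_dist_def)
      have "U \<mu> uS \<sigma>' (dl \<beta>) = (\<Sum>w\<in>UNIV. \<mu> w * (\<Sum>m\<in>UNIV. \<sigma>' w m * uS (\<beta> m) w))" by (rule U_dl)
      also have "\<dots> \<le> (\<Sum>w\<in>UNIV. \<mu> w * (\<Sum>m\<in>UNIV. \<sigma>' w m * uS (\<beta> (f w)) w))"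
      proof (rule sum_mono)
        fix w
        have "(\<Sum>m\<in>UNIV. \<sigma>' w m * uS (\<beta> m) w) \<le> (\<Sum>m\<in>UNIV. \<sigma>' w m * uS (\<beta> (f w)) w)"
        proof (rule sum_mono)
          fix m
          have "0 \<le> \<sigma>' w m" using sd[of w] by blast
          thus "\<sigma>' w m * uS (\<beta> m) w \<le> \<sigma>' w m * uS (\<beta> (f w)) w" using le by (rule mult_left_mono[rotated])
        qed
        thus "\<mu> w * (\<Sum>m\<in>UNIV. \<sigma>' w m * uS (\<beta> m) w) \<le> \<mu> w * (\<Sum>m\<in>UNIV. \<sigma>' w m * uS (\<beta> (f w)) w)"
          using mu0 by (intro mult_left_mono) auto
      qed
      also have "\<dots> = (\<Sum>w\<in>UNIV. \<mu> w * uS (\<beta> (f w)) w)"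
      proof (rule sum.cong[OF refl])
        fix w
        have "(\<Sum>m\<in>UNIV. \<sigma>' w m * uS (\<beta> (f w)) w) = (\<Sum>m\<in>UNIV. \<sigma>' w m) * uS (\<beta> (f w)) w"
          by (rule sum_distrib_right[symmetric])
        thus "\<mu> w * (\<Sum>m\<in>UNIV. \<sigma>' w m * uS (\<beta> (f w)) w) = \<mu> w * uS (\<beta> (f w)) w" using sd[of w] by simp
      qed
      also have "\<dots> = U \<mu> uS (ind f) (dl \<beta>)" by (rule U_ind_dl[symmetric])
      finally show False using gt by simp
    qed
    then obtain w m where wm: "uS (\<beta> m) w > uS (\<beta> (f w)) w" by blast
    define m2 where "m2 = (if m \<in> range f then m else f w0)"
    have bm2: "\<beta> m2 = \<beta> m" by (simp add: m2_def \<beta>_def)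
    have m2r: "m2 \<in> range f" by (simp add: m2_def)
    define m1 where "m1 = f w"
    have m12: "m1 \<noteq> m2" using wm bm2 m1_def by auto
    define c where "c = (\<lambda>m'. (if m' = m2 then 1 else 0) - (if m' = m1 then 1 else (0::real)))"
    define \<sigma>e where "\<sigma>e e = (\<lambda>w' m'. ind f w' m' + (if w' = w then e * c m' else 0))" for e
    have one: "ind f w m1 = 1" by (simp add: ind_def m1_def)
    have mse: "msg_strat (\<sigma>e e)" if "0 \<le> e" "e \<le> 1" for e
      unfolding \<sigma>e_def c_def by (rule msg_pert[OF msg_ind one m12 that])
    have Ge: "G \<mu> uR (\<sigma>e e) m' a = G \<mu> uR (ind f) m' a + e * (\<mu> w * c m' * uR a w)" for e m' a
      unfolding \<sigma>e_def G_pert by (simp add: algebra_simps)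
    have ev: "\<forall>\<^sub>F e in at_right 0. \<forall>m' a. G \<mu> uR (\<sigma>e e) m' a \<le> G \<mu> uR (\<sigma>e e) m' (\<beta> m')"
    proof (intro eventually_all_finite)
      fix m' a
      show "\<forall>\<^sub>F e in at_right 0. G \<mu> uR (\<sigma>e e) m' a \<le> G \<mu> uR (\<sigma>e e) m' (\<beta> m')"
      proof (cases "c m' = 0 \<or> a = \<beta> m'")
        case True
        hence "G \<mu> uR (\<sigma>e e) m' a \<le> G \<mu> uR (\<sigma>e e) m' (\<beta> m')" for e
          using Gle unfolding Ge by auto
        thus ?thesis by simp
      next
        case False
        hence "m' = m1 \<or> m' = m2" and nb: "a \<noteq> \<beta> m'" by (auto simp: c_def split: if_splits)
        hence "m' \<in> range f" using m2r m1_def by auto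
        then obtain w'' where w'': "m' = f w''" by auto
        have strict: "G \<mu> uR (ind f) m' a < G \<mu> uR (ind f) m' (\<beta> m')"
          using bf_strict[of a f w''] nb unfolding w'' \<beta>f by simp
        let ?A = "G \<mu> uR (ind f) m' a" and ?B = "G \<mu> uR (ind f) m' (\<beta> m')"
        let ?KA = "\<mu> w * c m' * uR a w" and ?KB = "\<mu> w * c m' * uR (\<beta> m') w"
        have "((\<lambda>e. (?B + e * ?KB) - (?A + e * ?KA)) \<longlongrightarrow> (?B + 0 * ?KB) - (?A + 0 * ?KA)) (at_right 0)"
          by (intro tendsto_intros tendsto_ident_at)
        hence "((\<lambda>e. (?B + e * ?KB) - (?A + e * ?KA)) \<longlongrightarrow> ?B - ?A) (at_right 0)" by simp
        hence "\<forall>\<^sub>F e in at_right 0. (?B + e * ?KB) - (?A + e * ?KA) > 0"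
          using strict by (intro order_tendstoD(1)) auto
        thus ?thesis unfolding Ge by eventually_elim simp
      qed
    qed
    then obtain b where b: "b > 0" and bP: "\<And>y. y > 0 \<Longrightarrow> y < b \<Longrightarrow> \<forall>m' a. G \<mu> uR (\<sigma>e y) m' a \<le> G \<mu> uR (\<sigma>e y) m' (\<beta> m')"
      unfolding eventually_at_right_field by blast
    define e where "e = min (b/2) (1/2::real)"
    have e0: "0 < e" and eb: "e < b" and e1: "e \<le> 1" using b by (auto simp: e_def)
    have ppe: "persuasion_profile \<mu> uR (\<sigma>e e) (dl \<beta>)"
      unfolding persuasion_profile_def using mse[of e] e0 e1 act_dl RBR_dl bP[OF e0 eb] by auto
    have "U \<mu> uS (\<sigma>e e) (dl \<beta>) = val f + e * \<mu> w * (uS (\<beta> m2) w - uS (\<beta> m1) w)"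
      unfolding \<sigma>e_def U_pert Uval c_def sum_c ..
    moreover have "e * \<mu> w * (uS (\<beta> m2) w - uS (\<beta> m1) w) > 0"
      using e0 pos wm bm2 m1_def by simp
    ultimately have "U \<mu> uS (\<sigma>e e) (dl \<beta>) > val f" by simp
    moreover have "U \<mu> uS (\<sigma>e e) (dl \<beta>) \<le> Sup PS"
      using bddPS ppe unfolding PS_def by (intro cSup_upper) auto
    ultimately show False using nc' vp by simp
  qed
qed

theorem corollary1:
  fixes \<mu> :: "'w::finite \<Rightarrow> real"
  assumes "\<forall>w. \<mu> w > 0"
    and "(\<Sum>w\<in>UNIV. \<mu> w) = 1"
    and "CARD('m::finite) > max CARD('w) CARD('a::finite)"
  shows "\<exists>E :: (real ^ (bool \<times> 'a \<times> 'w)) set.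
           E \<subseteq> unit_cube \<and> E \<in> sets lebesgue \<and> emeasure lebesgue E = 1 \<and>
           (\<forall>x\<in>E. cheap_talk_values_randomization TYPE('m) \<mu> (env_uS x) (env_uR x)
                 \<longrightarrow> committed_values_randomization TYPE('m) \<mu> (env_uS x) (env_uR x))"
proof -
  define N where "N = \<Union>((\<lambda>(C,a,a'). {x::real^(bool\<times>'a\<times>'w). gvec \<mu> C a a' \<bullet> x = 0}) ` {(C,a,a'). C \<noteq> {} \<and> a \<noteq> a'})"
  have mp: "unit_cube - N \<in> sets lebesgue \<and> emeasure lebesgue (unit_cube - N) = 1"
    unfolding N_def by (rule measure_part[OF assms(1)])
  have impl: "cheap_talk_values_randomization TYPE('m) \<mu> (env_uS x) (env_uR x)
                 \<longrightarrow> committed_values_randomization TYPE('m) \<mu> (env_uS x) (env_uR x)"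
    if x: "x \<in> unit_cube - N" for x
  proof
    assume ct: "cheap_talk_values_randomization TYPE('m) \<mu> (env_uS x) (env_uR x)"
    have uS1: "\<forall>a w. env_uS x a w \<le> 1" using x by (auto simp: env_uS_def unit_cube_def)
    have gen: "\<forall>C a a'. C \<noteq> {} \<longrightarrow> a \<noteq> a' \<longrightarrow> (\<Sum>w\<in>C. \<mu> w * env_uR x a w) \<noteq> (\<Sum>w\<in>C. \<mu> w * env_uR x a' w)"
    proof (intro allI impI)
      fix C :: "'w set" and a a' :: 'a
      assume "C \<noteq> {}" "a \<noteq> a'"
      hence "x \<notin> {x::real^(bool\<times>'a\<times>'w). gvec \<mu> C a a' \<bullet> x = 0}" using x unfolding N_def by blast
      hence "(\<Sum>w\<in>C. \<mu> w * (env_uR x a w - env_uR x a' w)) \<noteq> 0" by (simp add: gvec_inner)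
      thus "(\<Sum>w\<in>C. \<mu> w * env_uR x a w) \<noteq> (\<Sum>w\<in>C. \<mu> w * env_uR x a' w)"
        by (simp add: right_diff_distrib sum_subtractf)
    qed
    show "committed_values_randomization TYPE('m) \<mu> (env_uS x) (env_uR x)"
      by (rule game[OF assms(1,2) uS1 gen ct])
  qed
  show ?thesis
    by (rule exI[of _ "unit_cube - N"]) (use mp impl in blast)
qed

end
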